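(* Let $k$ be a difference field of characteristic $0$ and $R=k\{y_1,\ldots,y_n\}$. Any strictly ascending chain of radical well-mixed monomial $\sigma$-ideals in $R$ is finite.
   Context: A difference field is a field $k$ with a ring endomorphism $\sigma$. $R=k\{y_1,\ldots,y_n\}$ is the polynomial ring over $k$ in the variables $\sigma^j(y_i)$ ($1\le i\le n$, $j\ge0$), with $\sigma$ extended naturally. For $p=\sum_i c_ix^i\in\mathbb{N}[x]$ and $a\in R$, $a^p=\prod_i(\sigma^i(a))^{c_i}$; a monomial is $\mathbf{y}^{\mathbf{u}}=y_1^{u_1}\cdots y_n^{u_n}$ with $\mathbf{u}\in\mathbb{N}[x]^n$. A $\sigma$-ideal is an ideal stable under $\sigma$; a monomial $\sigma$-ideal is a $\sigma$-ideal generated (as an ideal/$\sigma$-ideal) by monomials. A $\sigma$-ideal $I$ is well-mixed if $ab\in I$ implies $a\sigma(b)\in I$; radical means radical as an ideal. *)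

theory Defs
  imports Main "HOL-Library.Poly_Mapping"
begin

definition ring_endo :: "('k::comm_ring_1 \<Rightarrow> 'k) \<Rightarrow> bool" where
  "ring_endo s \<longleftrightarrow> (\<forall>a b. s (a + b) = s a + s b) \<and> (\<forall>a b. s (a * b) = s a * s b) \<and> s 1 = 1"

text \<open>The difference polynomial ring k{y_v : v in 'v}: ordinary polynomials over k in the
  variables (v, j), standing for sigma^j(y_v).\<close>

definition shift_mon :: "(('v \<times> nat) \<Rightarrow>\<^sub>0 nat) \<Rightarrow> (('v \<times> nat) \<Rightarrow>\<^sub>0 nat)" where
  "shift_mon m = (\<Sum>x\<in>Poly_Mapping.keys m. Poly_Mapping.single (fst x, Suc (snd x)) (Poly_Mapping.lookup m x))"

definition dsigma :: "('k::comm_ring_1 \<Rightarrow> 'k) \<Rightarrow> ((('v \<times> nat) \<Rightarrow>\<^sub>0 nat) \<Rightarrow>\<^sub>0 'k) \<Rightarrow> ((('v \<times> nat) \<Rightarrow>\<^sub>0 nat) \<Rightarrow>\<^sub>0 'k)" where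
  "dsigma s p = (\<Sum>m\<in>Poly_Mapping.keys p. Poly_Mapping.single (shift_mon m) (s (Poly_Mapping.lookup p m)))"

definition dmonomials :: "((('v \<times> nat) \<Rightarrow>\<^sub>0 nat) \<Rightarrow>\<^sub>0 'k::comm_ring_1) set" where
  "dmonomials = {Poly_Mapping.single m 1 | m. True}"

definition is_ideal :: "'a::comm_ring_1 set \<Rightarrow> bool" where
  "is_ideal I \<longleftrightarrow> 0 \<in> I \<and> (\<forall>a\<in>I. \<forall>b\<in>I. a + b \<in> I) \<and> (\<forall>a\<in>I. \<forall>r. r * a \<in> I)"

definition sigma_ideal :: "('a::comm_ring_1 \<Rightarrow> 'a) \<Rightarrow> 'a set \<Rightarrow> bool" where
  "sigma_ideal S I \<longleftrightarrow> is_ideal I \<and> (\<forall>a\<in>I. S a \<in> I)"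

definition sigma_ideal_gen :: "('a::comm_ring_1 \<Rightarrow> 'a) \<Rightarrow> 'a set \<Rightarrow> 'a set" where
  "sigma_ideal_gen S M = \<Inter>{J. sigma_ideal S J \<and> M \<subseteq> J}"

definition monomial_sigma_ideal ::
  "('k::comm_ring_1 \<Rightarrow> 'k) \<Rightarrow> ((('v \<times> nat) \<Rightarrow>\<^sub>0 nat) \<Rightarrow>\<^sub>0 'k) set \<Rightarrow> bool" where
  "monomial_sigma_ideal s I \<longleftrightarrow>
     sigma_ideal (dsigma s) I \<and> (\<exists>M \<subseteq> dmonomials. I = sigma_ideal_gen (dsigma s) M)"

definition well_mixed :: "('a::comm_ring_1 \<Rightarrow> 'a) \<Rightarrow> 'a set \<Rightarrow> bool" where
  "well_mixed S I \<longleftrightarrow> (\<forall>a b. a * b \<in> I \<longrightarrow> a * S b \<in> I)"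

definition radical_ideal :: "'a::comm_ring_1 set \<Rightarrow> bool" where
  "radical_ideal I \<longleftrightarrow> (\<forall>a (n::nat). n > 0 \<longrightarrow> a ^ n \<in> I \<longrightarrow> a \<in> I)"

end

theory Submission imports Defs Complex_Main begin


lemma nat_inc_subseq:
  fixes X :: "nat \<Rightarrow> nat"
  shows "\<exists>f. strict_mono f \<and> incseq (\<lambda>n. X (f n))"
proof -
  obtain f where f: "strict_mono f" "monoseq (\<lambda>n. X (f n))" using seq_monosub by blast
  show ?thesis
  proof (cases "incseq (\<lambda>n. X (f n))")
    case True then show ?thesis using f by blast
  next
    case False
    hence dec: "\<And>m n. m \<le> n \<Longrightarrow> X (f n) \<le> X (f m)" using f(2) unfolding monoseq_def incseq_def by blast
    obtain n0 where n0: "X (f n0) = (LEAST v. v \<in> range (\<lambda>n. X (f n)))"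
      using LeastI[of "\<lambda>v. v \<in> range (\<lambda>n. X (f n))" "X (f 0)"] by auto
    have mn: "\<And>n. X (f n0) \<le> X (f n)" unfolding n0 by (rule Least_le) auto
    have c: "\<And>n. X (f (n0 + n)) = X (f n0)" using dec mn by (meson antisym le_add1)
    have "strict_mono (\<lambda>n. f (n0 + n))" using f(1) unfolding strict_mono_def by simp
    moreover have "incseq (\<lambda>n. X (f (n0 + n)))" unfolding incseq_def using c by simp
    ultimately show ?thesis by blast
  qed
qed

lemma dickson_aux:
  fixes u :: "nat \<Rightarrow> 'v \<Rightarrow> nat"
  assumes "finite C"
  shows "\<exists>f. strict_mono f \<and> (\<forall>c\<in>C. incseq (\<lambda>n. u (f n) c))"
  using assms
proof (induction C rule: finite_induct)
  case empty
  have "strict_mono (id::nat\<Rightarrow>nat)" by (simp add: strict_mono_def)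
  then show ?case by blast
next
  case (insert c C)
  then obtain f where f: "strict_mono f" "\<forall>c\<in>C. incseq (\<lambda>n. u (f n) c)" by blast
  obtain g where g: "strict_mono g" "incseq (\<lambda>n. u (f (g n)) c)"
    using nat_inc_subseq[of "\<lambda>n. u (f n) c"] by blast
  have "strict_mono (\<lambda>n. f (g n))" using f g by (simp add: strict_mono_def)
  moreover have "\<forall>c\<in>C. incseq (\<lambda>n. u (f (g n)) c)"
  proof
    fix c' assume "c' \<in> C"
    then have i: "incseq (\<lambda>n. u (f n) c')" using f(2) by blast
    show "incseq (\<lambda>n. u (f (g n)) c')" unfolding incseq_def
    proof (intro allI impI)
      fix m n :: nat assume "m \<le> n"
      then have "g m \<le> g n" using g(1) by (simp add: strict_mono_less_eq)
      then show "u (f (g m)) c' \<le> u (f (g n)) c'" using i by (simp add: incseq_def)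
    qed
  qed
  ultimately show ?case using g(2) by (intro exI[of _ "\<lambda>n. f (g n)"]) auto
qed

lemma dickson:
  fixes u :: "nat \<Rightarrow> 'v::finite \<Rightarrow> nat"
  shows "\<exists>i j. i < j \<and> (\<forall>v. u i v \<le> u j v)"
proof -
  obtain f where f: "strict_mono f" "\<forall>c\<in>UNIV. incseq (\<lambda>n. u (f n) c)"
    using dickson_aux[where C=UNIV and u=u] by auto
  have "f 0 < f 1" using f(1) by (simp add: strict_mono_def)
  moreover have "\<forall>v. u (f 0) v \<le> u (f 1) v" using f(2) unfolding incseq_def by simp
  ultimately show ?thesis by blast
qed



abbreviation mon :: "(('v \<times> nat) \<Rightarrow>\<^sub>0 nat) \<Rightarrow> ((('v \<times> nat) \<Rightarrow>\<^sub>0 nat) \<Rightarrow>\<^sub>0 'k::comm_ring_1)"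
  where "mon m \<equiv> Poly_Mapping.single m 1"

definition ind :: "'a set \<Rightarrow> 'a \<Rightarrow>\<^sub>0 nat" where
  "ind S = (\<Sum>x\<in>S. Poly_Mapping.single x 1)"

lemma lookup_ind: "finite S \<Longrightarrow> Poly_Mapping.lookup (ind S) x = (if x \<in> S then 1 else 0)"
  unfolding ind_def by (simp add: lookup_sum lookup_single when_def)

lemma keys_ind: "finite S \<Longrightarrow> Poly_Mapping.keys (ind S) = S"
proof -
  assume f: "finite S"
  show ?thesis
  proof (rule set_eqI)
    fix x show "x \<in> Poly_Mapping.keys (ind S) \<longleftrightarrow> x \<in> S"
      unfolding in_keys_iff lookup_ind[OF f] by simp
  qed
qed

lemma sum_monos: "(\<Sum>m\<in>Poly_Mapping.keys p. Poly_Mapping.single m (Poly_Mapping.lookup p m)) = p"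
proof (rule poly_mapping_eqI)
  fix x
  show "Poly_Mapping.lookup (\<Sum>m\<in>Poly_Mapping.keys p. Poly_Mapping.single m (Poly_Mapping.lookup p m)) x = Poly_Mapping.lookup p x"
    by (simp add: lookup_sum lookup_single when_def in_keys_iff)
qed

lemma shift_single: "shift_mon (Poly_Mapping.single (v, j) (1::nat)) = Poly_Mapping.single (v, Suc j) 1"
  unfolding shift_mon_def by simp

lemma dsigma_mon: "ring_endo s \<Longrightarrow> dsigma s (mon m) = mon (shift_mon m)"
  unfolding dsigma_def ring_endo_def by simp

lemma keys_dsigma: "Poly_Mapping.keys (dsigma s p) \<subseteq> shift_mon ` Poly_Mapping.keys p"
proof
  fix x assume "x \<in> Poly_Mapping.keys (dsigma s p)"
  then obtain m where "m \<in> Poly_Mapping.keys p" "x \<in> Poly_Mapping.keys (Poly_Mapping.single (shift_mon m) (s (Poly_Mapping.lookup p m)))"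
  proof -
    have "x \<in> (\<Union>m\<in>Poly_Mapping.keys p. Poly_Mapping.keys (Poly_Mapping.single (shift_mon m) (s (Poly_Mapping.lookup p m))))"
      using keys_sum \<open>x \<in> Poly_Mapping.keys (dsigma s p)\<close> unfolding dsigma_def by (rule subsetD)
    then show ?thesis using that by blast
  qed
  then show "x \<in> shift_mon ` Poly_Mapping.keys p" by (cases "s (Poly_Mapping.lookup p m) = 0") auto
qed

lemma mon_power: "\<exists>m'. (mon m :: (_ \<Rightarrow>\<^sub>0 'k::comm_ring_1)) ^ n = mon m' \<and> (\<forall>x. Poly_Mapping.lookup m' x = n * Poly_Mapping.lookup m x)"
proof (induction n)
  case 0
  show ?case by (rule exI[of _ 0]) (simp add: one_poly_mapping.abs_eq[symmetric] Poly_Mapping.single.abs_eq)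
next
  case (Suc n)
  then obtain m' where m': "(mon m :: (_ \<Rightarrow>\<^sub>0 'k)) ^ n = mon m'" "\<forall>x. Poly_Mapping.lookup m' x = n * Poly_Mapping.lookup m x" by blast
  show ?case
    by (rule exI[of _ "m + m'"]) (simp add: m' mult_single lookup_add)
qed



locale rwm =
  fixes s :: "'k::field \<Rightarrow> 'k" and I :: "((('v \<times> nat) \<Rightarrow>\<^sub>0 nat) \<Rightarrow>\<^sub>0 'k) set"
  assumes endo: "ring_endo s" and rad: "radical_ideal I" and wm: "well_mixed (dsigma s) I"
    and msi: "monomial_sigma_ideal s I"
begin

lemma ideal: "is_ideal I" using msi unfolding monomial_sigma_ideal_def sigma_ideal_def by blast
lemma I0: "0 \<in> I" using ideal unfolding is_ideal_def by blast
lemma Iadd: "a \<in> I \<Longrightarrow> b \<in> I \<Longrightarrow> a + b \<in> I" using ideal unfolding is_ideal_def by blast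
lemma Imul: "a \<in> I \<Longrightarrow> r * a \<in> I" using ideal unfolding is_ideal_def by blast
lemma Imul2: "a \<in> I \<Longrightarrow> a * r \<in> I" using Imul by (simp add: mult.commute)

lemma Isum: "finite A \<Longrightarrow> (\<forall>x\<in>A. f x \<in> I) \<Longrightarrow> sum f A \<in> I"
  by (induction A rule: finite_induct) (auto intro: I0 Iadd)

lemma mem_if: "(\<forall>m\<in>Poly_Mapping.keys p. mon m \<in> I) \<Longrightarrow> p \<in> I"
proof -
  assume h: "\<forall>m\<in>Poly_Mapping.keys p. mon m \<in> I"
  have "(\<Sum>m\<in>Poly_Mapping.keys p. Poly_Mapping.single m (Poly_Mapping.lookup p m)) \<in> I"
  proof (rule Isum)
    show "\<forall>m\<in>Poly_Mapping.keys p. Poly_Mapping.single m (Poly_Mapping.lookup p m) \<in> I"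
    proof
      fix m assume "m \<in> Poly_Mapping.keys p"
      then have "Poly_Mapping.single 0 (Poly_Mapping.lookup p m) * mon m \<in> I" using h Imul by blast
      then show "Poly_Mapping.single m (Poly_Mapping.lookup p m) \<in> I" by (simp add: mult_single)
    qed
  qed simp
  then show ?thesis by (simp add: sum_monos)
qed

lemma mem_only: "p \<in> I \<Longrightarrow> m \<in> Poly_Mapping.keys p \<Longrightarrow> mon m \<in> I"
proof -
  assume p: "p \<in> I" and m: "m \<in> Poly_Mapping.keys p"
  obtain M where M: "M \<subseteq> dmonomials" "I = sigma_ideal_gen (dsigma s) M"
    using msi unfolding monomial_sigma_ideal_def by blast
  define J where "J = {q::(_ \<Rightarrow>\<^sub>0 'k). \<forall>m\<in>Poly_Mapping.keys q. mon m \<in> I}"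
  have "sigma_ideal (dsigma s) J"
    unfolding sigma_ideal_def is_ideal_def
  proof (intro conjI ballI allI)
    show "0 \<in> J" unfolding J_def by simp
  next
    fix a b assume "a \<in> J" "b \<in> J"
    then show "a + b \<in> J" unfolding J_def using keys_add[of a b] by (simp add: subset_iff) blast
  next
    fix a r assume a: "a \<in> J"
    show "r * a \<in> J" unfolding J_def mem_Collect_eq
    proof
      fix x assume "x \<in> Poly_Mapping.keys (r * a)"
      then have "x \<in> {y + z |y z. y \<in> Poly_Mapping.keys r \<and> z \<in> Poly_Mapping.keys a}"
        using keys_mult by (rule subsetD[rotated])
      then obtain y z where x: "x = y + z" "z \<in> Poly_Mapping.keys a" by blast
      then have "mon y * mon z \<in> I" using a Imul unfolding J_def by blast
      then show "mon x \<in> I" using x by (simp add: mult_single)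
    qed
  next
    fix a assume a: "a \<in> J"
    show "dsigma s a \<in> J" unfolding J_def mem_Collect_eq
    proof
      fix x assume "x \<in> Poly_Mapping.keys (dsigma s a)"
      then obtain y where y: "x = shift_mon y" "y \<in> Poly_Mapping.keys a" using keys_dsigma[of s a] by (auto simp: subset_iff)
      then have "mon y \<in> I" using a unfolding J_def by blast
      then have "dsigma s (mon y) \<in> I"
        using msi unfolding monomial_sigma_ideal_def sigma_ideal_def by blast
      then show "mon x \<in> I" using y by (simp only: dsigma_mon[OF endo])
    qed
  qed
  moreover have "M \<subseteq> J"
  proof
    fix q assume q: "q \<in> M"
    then obtain m where qm: "q = mon m" using M(1) unfolding dmonomials_def by blast
    have "q \<in> I" using q M(2) unfolding sigma_ideal_gen_def by blast
    then show "q \<in> J" unfolding J_def qm by simp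
  qed
  ultimately have "I \<subseteq> J" using M(2) unfolding sigma_ideal_gen_def by blast
  then show ?thesis using p m unfolding J_def by blast
qed

lemma mem_iff: "p \<in> I \<longleftrightarrow> (\<forall>m\<in>Poly_Mapping.keys p. mon m \<in> I)"
  using mem_if mem_only by blast


lemma mon_keys:
  assumes m: "mon m \<in> I" and k: "Poly_Mapping.keys m \<subseteq> Poly_Mapping.keys m'"
  shows "mon m' \<in> I"
proof -
  define n where "n = Suc (\<Sum>x\<in>Poly_Mapping.keys m. Poly_Mapping.lookup m x)"
  obtain w where w: "(mon m' :: (_ \<Rightarrow>\<^sub>0 'k)) ^ n = mon w" "\<forall>x. Poly_Mapping.lookup w x = n * Poly_Mapping.lookup m' x"
    using mon_power by blast
  have le: "Poly_Mapping.lookup m x \<le> Poly_Mapping.lookup w x" for x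
  proof (cases "x \<in> Poly_Mapping.keys m")
    case True
    then have "x \<in> Poly_Mapping.keys m'" using k by blast
    then have "Poly_Mapping.lookup m' x \<noteq> 0" by (simp add: in_keys_iff)
    then have "Poly_Mapping.lookup m' x \<ge> 1" by simp
    moreover have "Poly_Mapping.lookup m x \<le> n" unfolding n_def
      using member_le_sum[OF True, of "Poly_Mapping.lookup m"] by simp
    ultimately show ?thesis using w(2) by (metis le_trans mult_le_mono2 nat_mult_1_right)
  next
    case False
    then show ?thesis by (simp add: in_keys_iff)
  qed
  have "m + (w - m) = w"
    by (rule poly_mapping_eqI) (simp add: lookup_add lookup_minus le)
  then have "mon w = mon m * (mon (w - m) :: (_ \<Rightarrow>\<^sub>0 'k))" by (simp add: mult_single)
  then have "mon w \<in> I" using Imul2[OF m] by simp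
  then have "(mon m' :: (_ \<Rightarrow>\<^sub>0 'k)) ^ n \<in> I" using w(1) by simp
  then show ?thesis using rad unfolding radical_ideal_def n_def by blast
qed

lemma mon_Fin: "mon m \<in> I \<longleftrightarrow> mon (ind (Poly_Mapping.keys m)) \<in> I"
  using mon_keys keys_ind[of "Poly_Mapping.keys m"] by auto

lemma Fin_mono: "finite S' \<Longrightarrow> S \<subseteq> S' \<Longrightarrow> finite S \<Longrightarrow> mon (ind S) \<in> I \<Longrightarrow> mon (ind S') \<in> I"
  using mon_keys[of "ind S" "ind S'"] by (simp add: keys_ind)

lemma Fin_move:
  assumes f: "finite S" and S: "mon (ind S) \<in> I" and x: "(v, j) \<in> S"
  shows "mon (ind (insert (v, Suc j) (S - {(v, j)}))) \<in> I"
proof -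
  define a where "a = ind (S - {(v, j)})"
  have "ind S = a + Poly_Mapping.single (v, j) 1"
    unfolding a_def ind_def using sum.remove[OF f x, of "\<lambda>x. Poly_Mapping.single x 1"] by (metis add.commute)
  then have "mon a * mon (Poly_Mapping.single (v, j) 1) \<in> I" using S by (simp add: mult_single)
  then have "mon a * dsigma s (mon (Poly_Mapping.single (v, j) 1)) \<in> I"
    using wm unfolding well_mixed_def by blast
  then have "mon a * mon (Poly_Mapping.single (v, Suc j) 1) \<in> I"
    by (simp only: dsigma_mon[OF endo] shift_single)
  then have i: "mon (a + Poly_Mapping.single (v, Suc j) 1) \<in> I" by (simp add: mult_single)
  have "Poly_Mapping.keys (a + Poly_Mapping.single (v, Suc j) 1) = insert (v, Suc j) (S - {(v, j)})"
  proof (rule set_eqI)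
    fix y
    show "y \<in> Poly_Mapping.keys (a + Poly_Mapping.single (v, Suc j) 1) \<longleftrightarrow> y \<in> insert (v, Suc j) (S - {(v, j)})"
      unfolding in_keys_iff a_def lookup_add lookup_ind[OF finite_Diff[OF f]]
      by (auto simp: lookup_single when_def)
  qed
  then show ?thesis using i mon_Fin by metis
qed

lemma Fin_remove_aux:
  "\<forall>S j. finite S \<and> mon (ind S) \<in> I \<and> (v, j) \<in> S \<and> (v, j + d + 1) \<in> S \<longrightarrow> mon (ind (S - {(v, j)})) \<in> I"
proof (induction d)
  case 0
  show ?case
  proof (intro allI impI)
    fix S j assume h: "finite S \<and> mon (ind S) \<in> I \<and> (v, j) \<in> S \<and> (v, j + 0 + 1) \<in> S"
    then have "mon (ind (insert (v, Suc j) (S - {(v, j)}))) \<in> I" using Fin_move by blast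
    moreover have "insert (v, Suc j) (S - {(v, j)}) = S - {(v, j)}" using h by auto
    ultimately show "mon (ind (S - {(v, j)})) \<in> I" by simp
  qed
next
  case (Suc d)
  show ?case
  proof (intro allI impI)
    fix S j assume h: "finite S \<and> mon (ind S) \<in> I \<and> (v, j) \<in> S \<and> (v, j + Suc d + 1) \<in> S"
    define S2 where "S2 = insert (v, Suc j) (S - {(v, j)})"
    have "mon (ind S2) \<in> I" unfolding S2_def using Fin_move h by blast
    moreover have "finite S2" "(v, Suc j) \<in> S2" "(v, Suc j + d + 1) \<in> S2" using h unfolding S2_def by auto
    ultimately have "mon (ind (S2 - {(v, Suc j)})) \<in> I" using Suc.IH by blast
    moreover have "S2 - {(v, Suc j)} \<subseteq> S - {(v, j)}" unfolding S2_def by auto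
    ultimately show "mon (ind (S - {(v, j)})) \<in> I"
      using Fin_mono h \<open>finite S2\<close> by (meson finite_Diff)
  qed
qed

lemma Fin_remove:
  assumes "finite S" "mon (ind S) \<in> I" "(v, j) \<in> S" "(v, k) \<in> S" "j < k"
  shows "mon (ind (S - {(v, j)})) \<in> I"
proof -
  have "k = j + (k - j - 1) + 1" using assms(5) by simp
  then show ?thesis using Fin_remove_aux[of v "k - j - 1"] assms by metis
qed

lemma Fin_dom:
  assumes "finite S0" "mon (ind S0) \<in> I" "finite S"
    "\<forall>x\<in>S0. \<exists>y\<in>S. fst y = fst x \<and> snd x \<le> snd y"
  shows "mon (ind S) \<in> I"
  using assms
proof (induction "card (S0 - S)" arbitrary: S0 rule: less_induct)
  case less
  show ?case
  proof (cases "S0 \<subseteq> S")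
    case True
    then show ?thesis using Fin_mono less.prems by blast
  next
    case False
    then obtain x where x: "x \<in> S0" "x \<notin> S" by blast
    then obtain y where y: "y \<in> S" "fst y = fst x" "snd x \<le> snd y" using less.prems(4) by blast
    have xy: "snd x < snd y" using x y by (metis le_neq_implies_less prod.collapse)
    define S1 where "S1 = insert y S0"
    have f1: "finite S1" using less.prems unfolding S1_def by simp
    have "mon (ind S1) \<in> I" using Fin_mono[OF f1 _ less.prems(1,2)] unfolding S1_def by blast
    moreover have "(fst x, snd y) = y" using y(2) by (metis prod.collapse)
    then have "(fst x, snd x) \<in> S1" "(fst x, snd y) \<in> S1" using x y unfolding S1_def by auto
    ultimately have "mon (ind (S1 - {(fst x, snd x)})) \<in> I" using Fin_remove[OF f1] xy by blast
    then have i: "mon (ind (S1 - {x})) \<in> I" by simp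
    have "S1 - {x} - S = S0 - S - {x}" unfolding S1_def using y x by auto
    then have "card (S1 - {x} - S) < card (S0 - S)"
      using x less.prems(1) card_Diff1_less[of "S0 - S" x] by simp
    moreover have "\<forall>z\<in>S1 - {x}. \<exists>y\<in>S. fst y = fst z \<and> snd z \<le> snd y"
      using less.prems(4) y unfolding S1_def by auto
    ultimately show ?thesis using less.hyps[of "S1 - {x}"] i f1 less.prems(3) by blast
  qed
qed

end


definition phi :: "('v \<times> nat) set \<Rightarrow> 'v \<Rightarrow> nat" where
  "phi S v = (if \<exists>j. (v, j) \<in> S then Suc (Max {j. (v, j) \<in> S}) else 0)"

lemma fin_slice: "finite S \<Longrightarrow> finite {j. (v, j) \<in> S}"
  by (rule finite_subset[of _ "snd ` S"]) force+

lemma phi_dom: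
  assumes "finite S" "finite S0" "\<forall>v. phi S0 v \<le> phi S v"
  shows "\<forall>x\<in>S0. \<exists>y\<in>S. fst y = fst x \<and> snd x \<le> snd y"
proof
  fix x assume x: "x \<in> S0"
  obtain v j where vj: "x = (v, j)" by (cases x)
  have a0: "(v, j) \<in> S0" using x vj by simp
  then have p0: "phi S0 v = Suc (Max {j. (v, j) \<in> S0})" unfolding phi_def by auto
  have jle: "j \<le> Max {j. (v, j) \<in> S0}" using a0 fin_slice[OF assms(2)] by (simp add: Max_ge)
  have "phi S v > 0" using p0 assms(3) by (metis zero_less_Suc less_le_trans)
  then have ex: "\<exists>j. (v, j) \<in> S" unfolding phi_def by (auto split: if_splits)
  then have p: "phi S v = Suc (Max {j. (v, j) \<in> S})" unfolding phi_def by auto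
  have mem: "Max {j. (v, j) \<in> S} \<in> {j. (v, j) \<in> S}"
    using ex fin_slice[OF assms(1)] by (intro Max_in) auto
  have "Max {j. (v, j) \<in> S0} \<le> Max {j. (v, j) \<in> S}" using p p0 assms(3) by (metis Suc_le_mono)
  then show "\<exists>y\<in>S. fst y = fst x \<and> snd x \<le> snd y"
    using mem jle vj by (intro bexI[of _ "(v, Max {j. (v, j) \<in> S})"]) auto
qed

theorem corollary5p7:
  fixes s :: "'k::{field, ring_char_0} \<Rightarrow> 'k"
  assumes "ring_endo s"
  shows "\<not> (\<exists>I :: nat \<Rightarrow> ((('v::finite \<times> nat) \<Rightarrow>\<^sub>0 nat) \<Rightarrow>\<^sub>0 'k) set.
            (\<forall>i. radical_ideal (I i) \<and> well_mixed (dsigma s) (I i) \<and> monomial_sigma_ideal s (I i))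
            \<and> (\<forall>i. I i \<subset> I (Suc i)))"
proof
  assume "\<exists>I :: nat \<Rightarrow> ((('v::finite \<times> nat) \<Rightarrow>\<^sub>0 nat) \<Rightarrow>\<^sub>0 'k) set.
            (\<forall>i. radical_ideal (I i) \<and> well_mixed (dsigma s) (I i) \<and> monomial_sigma_ideal s (I i))
            \<and> (\<forall>i. I i \<subset> I (Suc i))"
  then obtain I :: "nat \<Rightarrow> ((('v::finite \<times> nat) \<Rightarrow>\<^sub>0 nat) \<Rightarrow>\<^sub>0 'k) set" where
    h: "\<forall>i. radical_ideal (I i) \<and> well_mixed (dsigma s) (I i) \<and> monomial_sigma_ideal s (I i)"
    and ch: "\<forall>i. I i \<subset> I (Suc i)" by blast
  have R: "rwm s (I i)" for i unfolding rwm_def using assms h by blast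
  have mono: "I i \<subseteq> I j" if "i \<le> j" for i j
    using lift_Suc_mono_le[of I, OF _ that] ch by blast
  have "\<exists>S. finite S \<and> (mon (ind S) :: (_ \<Rightarrow>\<^sub>0 'k)) \<in> I (Suc i) \<and> mon (ind S) \<notin> I i" for i
  proof -
    obtain p where p: "p \<in> I (Suc i)" "p \<notin> I i" using ch by blast
    then obtain m where m: "m \<in> Poly_Mapping.keys p" "mon m \<notin> I i" using rwm.mem_iff[OF R] by blast
    have "mon m \<in> I (Suc i)" using rwm.mem_iff[OF R] p(1) m(1) by blast
    then show ?thesis using m rwm.mon_Fin[OF R] by (intro exI[of _ "Poly_Mapping.keys m"]) auto
  qed
  then obtain S where S: "\<And>i. finite (S i) \<and> (mon (ind (S i)) :: (_ \<Rightarrow>\<^sub>0 'k)) \<in> I (Suc i) \<and> mon (ind (S i)) \<notin> I i"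
    by metis
  obtain i j where ij: "i < j" "\<forall>v. phi (S i) v \<le> phi (S j) v"
    using dickson[of "\<lambda>i. phi (S i)"] by blast
  have "(mon (ind (S i)) :: (_ \<Rightarrow>\<^sub>0 'k)) \<in> I j" using S[of i] mono[of "Suc i" j] ij(1) by auto
  then have "(mon (ind (S j)) :: (_ \<Rightarrow>\<^sub>0 'k)) \<in> I j"
    using rwm.Fin_dom[OF R, of "S i" j "S j"] S phi_dom[of "S j" "S i"] ij(2) by blast
  then show False using S[of j] by blast
qed

end
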